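(* Let $\Psi$ be a well-formed declarative context and suppose $\Psi\vdash e\Rightarrow A$. Then: (i) if $\Psi,x:A\vdash e'\Leftarrow C$ then $\Psi\vdash[e/x]e'\Leftarrow C$; (ii) if $\Psi,x:A\vdash e'\Rightarrow C$ then $\Psi\vdash[e/x]e'\Rightarrow C$; (iii) if $\Psi,x:A\vdash e'\bullet B\Rightarrow\!\!\Rightarrow C$ then $\Psi\vdash[e/x]e'\bullet B\Rightarrow\!\!\Rightarrow C$.
   Context: Types $A,B,C ::= 1\mid\alpha\mid\forall\alpha.A\mid A\to B$; monotypes $\sigma,\tau ::= 1\mid\alpha\mid\sigma\to\tau$; declarative contexts $\Psi ::= \cdot\mid\Psi,\alpha\mid\Psi,x:A$. Well-formedness $\Psi\vdash A$: all type variables of $A$ are bound or declared in $\Psi$. Declarative subtyping $\Psi\vdash A\le B$: least relation with $\alpha\in\Psi\Rightarrow\Psi\vdash\alpha\le\alpha$; $\Psi\vdash1\le1$; ($\Psi\vdash B_1\le A_1$, $\Psi\vdash A_2\le B_2$) $\Rightarrow\Psi\vdash A_1\to A_2\le B_1\to B_2$; ($\Psi\vdash\tau$ monotype, $\Psi\vdash[\tau/\alpha]A\le B$) $\Rightarrow\Psi\vdash\forall\alpha.A\le B$; $\Psi,\beta\vdash A\le B\Rightarrow\Psi\vdash A\le\forall\beta.B$. Terms $e ::= x\mid()\mid\lambda x.e\mid e_1\,e_2\mid(e:A)$; $[e/x]e'$ is capture-avoiding substitution of terms. Declarative bidirectional judgments (checking $\Leftarrow$, synthesis $\Rightarrow$,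 application $e\bullet A\Rightarrow\!\!\Rightarrow C$) are defined mutually by: $(x:A)\in\Psi\Rightarrow\Psi\vdash x\Rightarrow A$; ($\Psi\vdash e\Rightarrow A$, $\Psi\vdash A\le B$) $\Rightarrow\Psi\vdash e\Leftarrow B$; ($\Psi\vdash A$, $\Psi\vdash e\Leftarrow A$) $\Rightarrow\Psi\vdash(e:A)\Rightarrow A$; $\Psi\vdash()\Leftarrow1$; $\Psi\vdash()\Rightarrow1$; $\Psi,\alpha\vdash e\Leftarrow A\Rightarrow\Psi\vdash e\Leftarrow\forall\alpha.A$; ($\Psi\vdash\tau$ monotype, $\Psi\vdash e\bullet[\tau/\alpha]A\Rightarrow\!\!\Rightarrow C$) $\Rightarrow\Psi\vdash e\bullet\forall\alpha.A\Rightarrow\!\!\Rightarrow C$; $\Psi,x:A\vdash e\Leftarrow B\Rightarrow\Psi\vdash\lambda x.e\Leftarrow A\to B$; ($\Psi\vdash\sigma\to\tau$ monotypes, $\Psi,x:\sigma\vdash e\Leftarrow\tau$) $\Rightarrow\Psi\vdash\lambda x.e\Rightarrow\sigma\to\tau$; ($\Psi\vdash e_1\Rightarrow A$, $\Psi\vdash e_2\bullet A\Rightarrow\!\!\Rightarrow C$) $\Rightarrow\Psi\vdash e_1\,e_2\Rightarrow C$; $\Psi\vdash e\Leftarrow A\Rightarrow\Psi\vdash e\bullet A\to C\Rightarrow\!\!\Rightarrow C$. *)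

theory Defs
  imports Main
begin

text \<open>Locally nameless representation: free type/term variables are names (nat),
bound variables are de Bruijn indices.  Capture-avoiding substitution is then
plain replacement of free names.\<close>

type_synonym tvname = nat
type_synonym vname = nat

datatype ty =
    TUnit
  | TFree tvname
  | TBound nat
  | TAll ty
  | TArr ty ty

datatype tm =
    Free vname
  | BVar nat
  | Unit
  | Lam tm
  | App tm tm
  | Anno tm ty

datatype ctx_entry = CTVar tvname | CVar vname ty

type_synonym ctx = "ctx_entry list"

fun tvars :: "ctx \<Rightarrow> tvname set" where
  "tvars [] = {}"
| "tvars (CTVar a # G) = insert a (tvars G)"
| "tvars (CVar x A # G) = tvars G"

fun vars :: "ctx \<Rightarrow> vname set" where
  "vars [] = {}"
| "vars (CTVar a # G) = vars G"
| "vars (CVar x A # G) = insert x (vars G)"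

fun ftv_ty :: "ty \<Rightarrow> tvname set" where
  "ftv_ty TUnit = {}"
| "ftv_ty (TFree a) = {a}"
| "ftv_ty (TBound n) = {}"
| "ftv_ty (TAll A) = ftv_ty A"
| "ftv_ty (TArr A B) = ftv_ty A \<union> ftv_ty B"

fun ftv_tm :: "tm \<Rightarrow> tvname set" where
  "ftv_tm (Free x) = {}"
| "ftv_tm (BVar n) = {}"
| "ftv_tm Unit = {}"
| "ftv_tm (Lam e) = ftv_tm e"
| "ftv_tm (App e1 e2) = ftv_tm e1 \<union> ftv_tm e2"
| "ftv_tm (Anno e A) = ftv_tm e \<union> ftv_ty A"

fun fv_tm :: "tm \<Rightarrow> vname set" where
  "fv_tm (Free x) = {x}"
| "fv_tm (BVar n) = {}"
| "fv_tm Unit = {}"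
| "fv_tm (Lam e) = fv_tm e"
| "fv_tm (App e1 e2) = fv_tm e1 \<union> fv_tm e2"
| "fv_tm (Anno e A) = fv_tm e"

fun ty_closed_at :: "nat \<Rightarrow> ty \<Rightarrow> bool" where
  "ty_closed_at k TUnit = True"
| "ty_closed_at k (TFree a) = True"
| "ty_closed_at k (TBound n) = (n < k)"
| "ty_closed_at k (TAll A) = ty_closed_at (Suc k) A"
| "ty_closed_at k (TArr A B) = (ty_closed_at k A \<and> ty_closed_at k B)"

definition wf_ty :: "ctx \<Rightarrow> ty \<Rightarrow> bool" where
  "wf_ty G A \<longleftrightarrow> ty_closed_at 0 A \<and> ftv_ty A \<subseteq> tvars G"

fun mono :: "ty \<Rightarrow> bool" where
  "mono TUnit = True"
| "mono (TFree a) = True"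
| "mono (TBound n) = True"
| "mono (TAll A) = False"
| "mono (TArr A B) = (mono A \<and> mono B)"

definition wf_mono :: "ctx \<Rightarrow> ty \<Rightarrow> bool" where
  "wf_mono G t \<longleftrightarrow> wf_ty G t \<and> mono t"

text \<open>Opening: replace bound type index k by U (this realises [U/\<alpha>]A for \<forall>\<alpha>.A).\<close>
fun open_ty :: "nat \<Rightarrow> ty \<Rightarrow> ty \<Rightarrow> ty" where
  "open_ty k U TUnit = TUnit"
| "open_ty k U (TFree a) = TFree a"
| "open_ty k U (TBound n) = (if n = k then U else TBound n)"
| "open_ty k U (TAll A) = TAll (open_ty (Suc k) U A)"
| "open_ty k U (TArr A B) = TArr (open_ty k U A) (open_ty k U B)"

fun open_tm :: "nat \<Rightarrow> tm \<Rightarrow> tm \<Rightarrow> tm" where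
  "open_tm k u (Free x) = Free x"
| "open_tm k u (BVar n) = (if n = k then u else BVar n)"
| "open_tm k u Unit = Unit"
| "open_tm k u (Lam e) = Lam (open_tm (Suc k) u e)"
| "open_tm k u (App e1 e2) = App (open_tm k u e1) (open_tm k u e2)"
| "open_tm k u (Anno e A) = Anno (open_tm k u e) A"

fun subst_tm :: "vname \<Rightarrow> tm \<Rightarrow> tm \<Rightarrow> tm" where
  "subst_tm x u (Free y) = (if y = x then u else Free y)"
| "subst_tm x u (BVar n) = BVar n"
| "subst_tm x u Unit = Unit"
| "subst_tm x u (Lam e) = Lam (subst_tm x u e)"
| "subst_tm x u (App e1 e2) = App (subst_tm x u e1) (subst_tm x u e2)"
| "subst_tm x u (Anno e A) = Anno (subst_tm x u e) A"

inductive wf_ctx :: "ctx \<Rightarrow> bool" where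
  wf_nil: "wf_ctx []"
| wf_tvar: "wf_ctx G \<Longrightarrow> a \<notin> tvars G \<Longrightarrow> wf_ctx (G @ [CTVar a])"
| wf_var: "wf_ctx G \<Longrightarrow> x \<notin> vars G \<Longrightarrow> wf_ty G A \<Longrightarrow> wf_ctx (G @ [CVar x A])"

inductive sub :: "ctx \<Rightarrow> ty \<Rightarrow> ty \<Rightarrow> bool" where
  sub_var: "a \<in> tvars G \<Longrightarrow> sub G (TFree a) (TFree a)"
| sub_unit: "sub G TUnit TUnit"
| sub_arr: "sub G B1 A1 \<Longrightarrow> sub G A2 B2 \<Longrightarrow> sub G (TArr A1 A2) (TArr B1 B2)"
| sub_allL: "wf_mono G t \<Longrightarrow> sub G (open_ty 0 t A) B \<Longrightarrow> sub G (TAll A) B"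
| sub_allR: "b \<notin> tvars G \<Longrightarrow> b \<notin> ftv_ty A \<Longrightarrow> b \<notin> ftv_ty B \<Longrightarrow>
    sub (G @ [CTVar b]) A (open_ty 0 (TFree b) B) \<Longrightarrow> sub G A (TAll B)"

text \<open>Declarative bidirectional typing: chk = checking, syn = synthesis,
app = application judgment \<open>e \<bullet> A \<Rightarrow>\<Rightarrow> C\<close>.\<close>
inductive chk :: "ctx \<Rightarrow> tm \<Rightarrow> ty \<Rightarrow> bool"
  and syn :: "ctx \<Rightarrow> tm \<Rightarrow> ty \<Rightarrow> bool"
  and app :: "ctx \<Rightarrow> tm \<Rightarrow> ty \<Rightarrow> ty \<Rightarrow> bool" where
  syn_var: "CVar x A \<in> set G \<Longrightarrow> syn G (Free x) A"
| chk_sub: "syn G e A \<Longrightarrow> sub G A B \<Longrightarrow> chk G e B"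
| syn_anno: "wf_ty G A \<Longrightarrow> chk G e A \<Longrightarrow> syn G (Anno e A) A"
| chk_unit: "chk G Unit TUnit"
| syn_unit: "syn G Unit TUnit"
| chk_all: "a \<notin> tvars G \<Longrightarrow> a \<notin> ftv_ty A \<Longrightarrow> a \<notin> ftv_tm e \<Longrightarrow>
    chk (G @ [CTVar a]) e (open_ty 0 (TFree a) A) \<Longrightarrow> chk G e (TAll A)"
| app_all: "wf_mono G t \<Longrightarrow> app G e (open_ty 0 t A) C \<Longrightarrow> app G e (TAll A) C"
| chk_lam: "x \<notin> vars G \<Longrightarrow> x \<notin> fv_tm e \<Longrightarrow>
    chk (G @ [CVar x A]) (open_tm 0 (Free x) e) B \<Longrightarrow> chk G (Lam e) (TArr A B)"
| syn_lam: "wf_mono G (TArr s t) \<Longrightarrow> x \<notin> vars G \<Longrightarrow> x \<notin> fv_tm e \<Longrightarrow>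
    chk (G @ [CVar x s]) (open_tm 0 (Free x) e) t \<Longrightarrow> syn G (Lam e) (TArr s t)"
| syn_app: "syn G e1 A \<Longrightarrow> app G e2 A C \<Longrightarrow> syn G (App e1 e2) C"
| app_arr: "chk G e A \<Longrightarrow> app G e (TArr A C) C"

end

theory Submission
  imports Defs
begin

definition swp :: "nat \<Rightarrow> nat \<Rightarrow> nat \<Rightarrow> nat" where
  "swp a b n = (if n = a then b else if n = b then a else n)"

lemma swp_swp[simp]: "swp a b (swp a b n) = n" by (simp add: swp_def)
lemma swp_inj[simp]: "(swp a b m = swp a b n) = (m = n)" by (auto simp: swp_def)
lemma swp_a[simp]: "swp a b a = b" and swp_b[simp]: "swp a b b = a" by (auto simp: swp_def)
lemma swp_other[simp]: "n \<noteq> a \<Longrightarrow> n \<noteq> b \<Longrightarrow> swp a b n = n" by (simp add: swp_def)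
lemma swp_mem[simp]: "(swp a b n \<in> swp a b ` S) = (n \<in> S)"
  by (metis image_iff swp_inj)

fun tsw :: "nat \<Rightarrow> nat \<Rightarrow> ty \<Rightarrow> ty" where
  "tsw a b TUnit = TUnit"
| "tsw a b (TFree c) = TFree (swp a b c)"
| "tsw a b (TBound n) = TBound n"
| "tsw a b (TAll A) = TAll (tsw a b A)"
| "tsw a b (TArr A B) = TArr (tsw a b A) (tsw a b B)"

fun tsw_tm :: "nat \<Rightarrow> nat \<Rightarrow> tm \<Rightarrow> tm" where
  "tsw_tm a b (Free x) = Free x"
| "tsw_tm a b (BVar n) = BVar n"
| "tsw_tm a b Unit = Unit"
| "tsw_tm a b (Lam e) = Lam (tsw_tm a b e)"
| "tsw_tm a b (App e1 e2) = App (tsw_tm a b e1) (tsw_tm a b e2)"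
| "tsw_tm a b (Anno e A) = Anno (tsw_tm a b e) (tsw a b A)"

fun tsw_ce :: "nat \<Rightarrow> nat \<Rightarrow> ctx_entry \<Rightarrow> ctx_entry" where
  "tsw_ce a b (CTVar c) = CTVar (swp a b c)"
| "tsw_ce a b (CVar x A) = CVar x (tsw a b A)"

fun vsw_tm :: "nat \<Rightarrow> nat \<Rightarrow> tm \<Rightarrow> tm" where
  "vsw_tm a b (Free x) = Free (swp a b x)"
| "vsw_tm a b (BVar n) = BVar n"
| "vsw_tm a b Unit = Unit"
| "vsw_tm a b (Lam e) = Lam (vsw_tm a b e)"
| "vsw_tm a b (App e1 e2) = App (vsw_tm a b e1) (vsw_tm a b e2)"
| "vsw_tm a b (Anno e A) = Anno (vsw_tm a b e) A"

fun vsw_ce :: "nat \<Rightarrow> nat \<Rightarrow> ctx_entry \<Rightarrow> ctx_entry" where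
  "vsw_ce a b (CTVar c) = CTVar c"
| "vsw_ce a b (CVar x A) = CVar (swp a b x) A"

fun ctxtv :: "ctx \<Rightarrow> nat set" where
  "ctxtv [] = {}"
| "ctxtv (CTVar a # G) = insert a (ctxtv G)"
| "ctxtv (CVar x A # G) = ftv_ty A \<union> ctxtv G"

fun tmc :: "nat \<Rightarrow> tm \<Rightarrow> bool" where
  "tmc k (Free x) = True"
| "tmc k (BVar n) = (n < k)"
| "tmc k Unit = True"
| "tmc k (Lam e) = tmc (Suc k) e"
| "tmc k (App e1 e2) = (tmc k e1 \<and> tmc k e2)"
| "tmc k (Anno e A) = tmc k e"

definition ctx_ok :: "ctx \<Rightarrow> bool" where
  "ctx_ok G \<longleftrightarrow> (\<forall>z T. CVar z T \<in> set G \<longrightarrow> ftv_ty T \<subseteq> tvars G)"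

definition cv_sub :: "ctx \<Rightarrow> ctx \<Rightarrow> bool" where
  "cv_sub G G' \<longleftrightarrow> (\<forall>z T. CVar z T \<in> set G \<longrightarrow> CVar z T \<in> set G')"

lemma tvars_app[simp]: "tvars (G @ H) = tvars G \<union> tvars H"
  by (induction G rule: tvars.induct) auto
lemma vars_app[simp]: "vars (G @ H) = vars G \<union> vars H"
  by (induction G rule: vars.induct) auto
lemma ctxtv_app[simp]: "ctxtv (G @ H) = ctxtv G \<union> ctxtv H"
  by (induction G rule: ctxtv.induct) auto
lemma tvars_ctxtv: "tvars G \<subseteq> ctxtv G"
  by (induction G rule: ctxtv.induct) auto
lemma cvar_ctxtv: "CVar z T \<in> set G \<Longrightarrow> ftv_ty T \<subseteq> ctxtv G"
  by (induction G rule: ctxtv.induct) auto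
lemma cvar_vars: "CVar z T \<in> set G \<Longrightarrow> z \<in> vars G"
  by (induction G rule: vars.induct) auto
lemma fin_ftv[simp]: "finite (ftv_ty A)" by (induction A) auto
lemma fin_ftv_tm[simp]: "finite (ftv_tm e)" by (induction e) auto
lemma fin_fv_tm[simp]: "finite (fv_tm e)" by (induction e) auto
lemma fin_ctxtv[simp]: "finite (ctxtv G)" by (induction G rule: ctxtv.induct) auto
lemma fin_vars[simp]: "finite (vars G)" by (induction G rule: vars.induct) auto

lemma fresh: "finite (S::nat set) \<Longrightarrow> \<exists>c. c \<notin> S"
  by (meson ex_new_if_finite infinite_UNIV_nat)

lemma tvars_tsw[simp]: "tvars (map (tsw_ce a b) G) = swp a b ` tvars G"
  by (induction G rule: tvars.induct) auto
lemma vars_tsw[simp]: "vars (map (tsw_ce a b) G) = vars G"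
  by (induction G rule: vars.induct) auto
lemma tvars_vsw[simp]: "tvars (map (vsw_ce a b) G) = tvars G"
  by (induction G rule: tvars.induct) auto
lemma vars_vsw[simp]: "vars (map (vsw_ce a b) G) = swp a b ` vars G"
  by (induction G rule: vars.induct) auto

lemma tsw_open: "tsw a b (open_ty k U A) = open_ty k (tsw a b U) (tsw a b A)"
  by (induction A arbitrary: k) auto
lemma ftv_tsw[simp]: "ftv_ty (tsw a b A) = swp a b ` ftv_ty A"
  by (induction A) (auto simp: image_Un)
lemma tsw_id: "a \<notin> ftv_ty A \<Longrightarrow> b \<notin> ftv_ty A \<Longrightarrow> tsw a b A = A"
  by (induction A) auto
lemma tsw_tsw[simp]: "tsw a b (tsw a b A) = A"
  by (induction A) auto
lemma closed_tsw[simp]: "ty_closed_at k (tsw a b A) = ty_closed_at k A"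
  by (induction A arbitrary: k) auto
lemma mono_tsw[simp]: "Defs.mono (tsw a b A) = Defs.mono A"
  by (induction A) auto
lemma tsw_ce_tsw_ce[simp]: "tsw_ce a b (tsw_ce a b c) = c"
  by (cases c) auto
lemma tsw_ctx_inv[simp]: "map (tsw_ce a b) (map (tsw_ce a b) G) = G"
  by (induction G) auto

lemma tsw_tm_open: "tsw_tm a b (open_tm k u e) = open_tm k (tsw_tm a b u) (tsw_tm a b e)"
  by (induction e arbitrary: k) auto
lemma ftv_tsw_tm[simp]: "ftv_tm (tsw_tm a b e) = swp a b ` ftv_tm e"
  by (induction e) (auto simp: image_Un)
lemma fv_tsw_tm[simp]: "fv_tm (tsw_tm a b e) = fv_tm e"
  by (induction e) auto
lemma tsw_tm_id: "a \<notin> ftv_tm e \<Longrightarrow> b \<notin> ftv_tm e \<Longrightarrow> tsw_tm a b e = e"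
  by (induction e) (auto simp: tsw_id)

lemma vsw_tm_open: "vsw_tm a b (open_tm k u e) = open_tm k (vsw_tm a b u) (vsw_tm a b e)"
  by (induction e arbitrary: k) auto
lemma ftv_vsw_tm[simp]: "ftv_tm (vsw_tm a b e) = ftv_tm e"
  by (induction e) auto
lemma fv_vsw_tm[simp]: "fv_tm (vsw_tm a b e) = swp a b ` fv_tm e"
  by (induction e) (auto simp: image_Un)
lemma vsw_tm_id: "a \<notin> fv_tm e \<Longrightarrow> b \<notin> fv_tm e \<Longrightarrow> vsw_tm a b e = e"
  by (induction e) auto
lemma vsw_ce_inv[simp]: "vsw_ce a b (vsw_ce a b c) = c"
  by (cases c) auto
lemma vsw_comp[simp]: "vsw_ce a b \<circ> vsw_ce a b = id" by auto
lemma vsw_ctx_inv[simp]: "map (vsw_ce a b) (map (vsw_ce a b) G) = G"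
  by (induction G) auto

lemma wf_ty_mono_ctx: "wf_ty G A \<Longrightarrow> tvars G \<subseteq> tvars G' \<Longrightarrow> wf_ty G' A"
  by (auto simp: wf_ty_def)
lemma wf_mono_mono_ctx: "wf_mono G A \<Longrightarrow> tvars G \<subseteq> tvars G' \<Longrightarrow> wf_mono G' A"
  by (auto simp: wf_mono_def wf_ty_def)
lemma wf_ty_tsw: "wf_ty G A \<Longrightarrow> tvars G' = swp a b ` tvars G \<Longrightarrow> wf_ty G' (tsw a b A)"
  by (auto simp: wf_ty_def)
lemma wf_mono_tsw: "wf_mono G A \<Longrightarrow> tvars G' = swp a b ` tvars G \<Longrightarrow> wf_mono G' (tsw a b A)"
  by (auto simp: wf_mono_def wf_ty_def)

lemma ftv_open: "ftv_ty (open_ty k U A) \<subseteq> ftv_ty U \<union> ftv_ty A"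
  by (induction A arbitrary: k) auto
lemma ftv_open2: "ftv_ty A \<subseteq> ftv_ty (open_ty k U A)"
  by (induction A arbitrary: k) auto

lemma sub_tsw: "sub G A B \<Longrightarrow> tvars G' = swp a b ` tvars G \<Longrightarrow> sub G' (tsw a b A) (tsw a b B)"
proof (induction arbitrary: G' rule: sub.induct)
  case (sub_var c G)
  then show ?case by (auto intro: sub.sub_var)
next
  case (sub_unit G) then show ?case by (auto intro: sub.sub_unit)
next
  case (sub_arr G B1 A1 A2 B2) then show ?case by (auto intro: sub.sub_arr)
next
  case (sub_allL G t A B)
  then show ?case by (auto intro!: sub.sub_allL[where t="tsw a b t"] wf_mono_tsw simp: tsw_open[symmetric])
next
  case (sub_allR c G A B)
  have "sub (G' @ [CTVar (swp a b c)]) (tsw a b A) (tsw a b (open_ty 0 (TFree c) B))"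
    using sub_allR by auto
  then show ?case using sub_allR
    by (auto intro!: sub.sub_allR[where b="swp a b c"] simp: tsw_open)
qed

lemma sub_tvars: "sub G A B \<Longrightarrow> tvars G' = tvars G \<Longrightarrow> sub G' A B"
proof -
  assume "sub G A B" "tvars G' = tvars G"
  moreover have "\<And>X. swp 0 0 ` X = X" by (auto simp: swp_def)
  moreover have "\<And>A. tsw 0 0 A = A" subgoal for A by (induction A) (auto simp: swp_def) done
  ultimately show ?thesis using sub_tsw[of G A B G' 0 0] by simp
qed


lemma sub_weak: "sub G A B \<Longrightarrow> tvars G \<subseteq> tvars G' \<Longrightarrow> sub G' A B"
proof (induction arbitrary: G' rule: sub.induct)
  case (sub_var c G) then show ?case by (auto intro: sub.sub_var)
next
  case (sub_unit G) then show ?case by (auto intro: sub.sub_unit)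
next
  case (sub_arr G B1 A1 A2 B2) then show ?case by (auto intro: sub.sub_arr)
next
  case (sub_allL G t A B)
  then show ?case by (auto intro!: sub.sub_allL[where t=t] intro: wf_mono_mono_ctx)
next
  case (sub_allR b G A B)
  obtain c where c: "c \<notin> tvars G' \<union> ftv_ty A \<union> ftv_ty B \<union> {b}"
    using fresh[of "tvars G' \<union> ftv_ty A \<union> ftv_ty B \<union> {b}"]
    by (metis finite_Un finite_insert finite.emptyI fin_ftv fin_vars tvars_ctxtv fin_ctxtv rev_finite_subset)
  let ?G = "map (tsw_ce b c) (G' @ [CTVar c])"
  have "tvars (G @ [CTVar b]) \<subseteq> tvars ?G"
  proof
    fix t assume t: "t \<in> tvars (G @ [CTVar b])"
    show "t \<in> tvars ?G"
    proof (cases "t = b")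
      case True then show ?thesis by (auto simp: image_iff intro: bexI[where x=c])
    next
      case False
      with t sub_allR.prems c have "t \<in> tvars G'" "t \<noteq> c" by auto
      then show ?thesis using False by (auto simp: image_iff intro!: bexI[where x=t])
    qed
  qed
  then have "sub ?G A (open_ty 0 (TFree b) B)" using sub_allR.IH by blast
  from sub_tsw[OF this, of "G' @ [CTVar c]" b c]
  have "sub (G' @ [CTVar c]) A (open_ty 0 (TFree c) B)"
    using c sub_allR.hyps by (simp add: image_image tsw_open tsw_id)
  then show ?case using c by (auto intro!: sub.sub_allR[where b=c])
qed

lemma chk_tsw:
  shows "chk G e A \<Longrightarrow> chk (map (tsw_ce a b) G) (tsw_tm a b e) (tsw a b A)"
    and "syn G e A \<Longrightarrow> syn (map (tsw_ce a b) G) (tsw_tm a b e) (tsw a b A)"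
    and "app G e A C \<Longrightarrow> app (map (tsw_ce a b) G) (tsw_tm a b e) (tsw a b A) (tsw a b C)"
proof (induction rule: chk_syn_app.inducts)
  case (syn_var x A G)
  then show ?case by (auto intro!: chk_syn_app.syn_var simp: image_iff intro!: bexI[where x="CVar x A"])
next
  case (chk_sub G e A B)
  then show ?case by (metis chk_syn_app.chk_sub sub_tsw tvars_tsw)
next
  case (syn_anno G A e)
  then show ?case by (auto intro!: chk_syn_app.syn_anno wf_ty_tsw)
next
  case (chk_unit G) then show ?case by (auto intro: chk_syn_app.chk_unit)
next
  case (syn_unit G) then show ?case by (auto intro: chk_syn_app.syn_unit)
next
  case (chk_all c G A e)
  then show ?case by (auto intro!: chk_syn_app.chk_all[where a="swp a b c"] simp: tsw_open)
next
  case (app_all G t e A C)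
  then show ?case by (auto intro!: chk_syn_app.app_all[where t="tsw a b t"] wf_mono_tsw simp: tsw_open[symmetric])
next
  case (chk_lam x G e A B)
  then show ?case by (auto intro!: chk_syn_app.chk_lam[where x=x] simp: tsw_tm_open)
next
  case (syn_lam G s t x e)
  have "wf_mono (map (tsw_ce a b) G) (tsw a b (TArr s t))"
    using syn_lam by (intro wf_mono_tsw) auto
  then show ?case using syn_lam by (auto intro!: chk_syn_app.syn_lam[where x=x] simp: tsw_tm_open)
next
  case (syn_app G e1 A e2 C)
  then show ?case by (auto intro: chk_syn_app.syn_app)
next
  case (app_arr G e A C)
  then show ?case by (auto intro: chk_syn_app.app_arr)
qed

lemma chk_vsw:
  shows "chk G e A \<Longrightarrow> chk (map (vsw_ce a b) G) (vsw_tm a b e) A"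
    and "syn G e A \<Longrightarrow> syn (map (vsw_ce a b) G) (vsw_tm a b e) A"
    and "app G e A C \<Longrightarrow> app (map (vsw_ce a b) G) (vsw_tm a b e) A C"
proof (induction rule: chk_syn_app.inducts)
  case (syn_var x A G)
  then show ?case by (auto intro!: chk_syn_app.syn_var simp: image_iff intro!: bexI[where x="CVar x A"])
next
  case (chk_sub G e A B)
  then show ?case by (metis chk_syn_app.chk_sub sub_tvars tvars_vsw)
next
  case (syn_anno G A e)
  then show ?case by (auto intro!: chk_syn_app.syn_anno simp: wf_ty_def)
next
  case (chk_unit G) then show ?case by (auto intro: chk_syn_app.chk_unit)
next
  case (syn_unit G) then show ?case by (auto intro: chk_syn_app.syn_unit)
next
  case (chk_all c G A e)
  then show ?case by (auto intro!: chk_syn_app.chk_all[where a=c])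
next
  case (app_all G t e A C)
  then show ?case by (auto intro!: chk_syn_app.app_all[where t=t] simp: wf_mono_def wf_ty_def)
next
  case (chk_lam x G e A B)
  then show ?case by (auto intro!: chk_syn_app.chk_lam[where x="swp a b x"] simp: vsw_tm_open)
next
  case (syn_lam G s t x e)
  then show ?case by (auto intro!: chk_syn_app.syn_lam[where x="swp a b x"] simp: vsw_tm_open wf_mono_def wf_ty_def)
next
  case (syn_app G e1 A e2 C)
  then show ?case by (auto intro: chk_syn_app.syn_app)
next
  case (app_arr G e A C)
  then show ?case by (auto intro: chk_syn_app.app_arr)
qed


lemma syn_ftv:
  shows "chk G e A \<Longrightarrow> True"
    and "syn G e A \<Longrightarrow> ctx_ok G \<Longrightarrow> ftv_ty A \<subseteq> tvars G"
    and "app G e A C \<Longrightarrow> ctx_ok G \<Longrightarrow> ftv_ty A \<subseteq> tvars G \<Longrightarrow> ftv_ty C \<subseteq> tvars G"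
proof (induction rule: chk_syn_app.inducts)
  case (app_all G t e A C)
  then show ?case using ftv_open[of 0 t A] by (auto simp: wf_mono_def wf_ty_def)
qed (auto simp: ctx_ok_def wf_ty_def wf_mono_def)

lemma weak:
  shows "chk G e A \<Longrightarrow> ctx_ok G \<Longrightarrow> ftv_ty A \<subseteq> tvars G \<Longrightarrow> tvars G \<subseteq> tvars G' \<Longrightarrow> cv_sub G G' \<Longrightarrow> chk G' e A"
    and "syn G e A \<Longrightarrow> ctx_ok G \<Longrightarrow> tvars G \<subseteq> tvars G' \<Longrightarrow> cv_sub G G' \<Longrightarrow> syn G' e A"
    and "app G e A C \<Longrightarrow> ctx_ok G \<Longrightarrow> ftv_ty A \<subseteq> tvars G \<Longrightarrow> tvars G \<subseteq> tvars G' \<Longrightarrow> cv_sub G G' \<Longrightarrow> app G' e A C"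
proof (induction arbitrary: G' and G' and G' rule: chk_syn_app.inducts)
  case (syn_var x A G)
  then show ?case by (auto intro!: chk_syn_app.syn_var simp: cv_sub_def)
next
  case (chk_sub G e A B)
  then show ?case by (auto intro: chk_syn_app.chk_sub sub_weak)
next
  case (syn_anno G A e)
  then show ?case by (auto intro!: chk_syn_app.syn_anno intro: wf_ty_mono_ctx simp: wf_ty_def)
next
  case (chk_unit G) then show ?case by (auto intro: chk_syn_app.chk_unit)
next
  case (syn_unit G) then show ?case by (auto intro: chk_syn_app.syn_unit)
next
  case (chk_all a G A e)
  have okG: "ctx_ok (G @ [CTVar a])" using chk_all.prems(1) by (auto simp: ctx_ok_def)
  have fA: "ftv_ty (open_ty 0 (TFree a) A) \<subseteq> tvars (G @ [CTVar a])"
    using chk_all.prems(2) ftv_open[of 0 "TFree a" A] by auto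
  obtain c where c: "c \<notin> ctxtv G' \<union> ftv_ty A \<union> ftv_tm e \<union> {a}"
    using fresh[of "ctxtv G' \<union> ftv_ty A \<union> ftv_tm e \<union> {a}"] by auto
  have cG': "c \<notin> tvars G'" using c tvars_ctxtv by blast
  let ?G = "map (tsw_ce a c) (G' @ [CTVar c])"
  have tv: "tvars (G @ [CTVar a]) \<subseteq> tvars ?G"
  proof
    fix t assume t: "t \<in> tvars (G @ [CTVar a])"
    show "t \<in> tvars ?G"
    proof (cases "t = a")
      case True then show ?thesis by (auto simp: image_iff intro: bexI[where x=c])
    next
      case False
      with t chk_all.prems cG' have "t \<in> tvars G'" "t \<noteq> c" by auto
      then show ?thesis using False by (auto simp: image_iff intro!: bexI[where x=t])
    qed
  qed
  have cv: "cv_sub (G @ [CTVar a]) ?G"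
    unfolding cv_sub_def
  proof (intro allI impI)
    fix z T assume "CVar z T \<in> set (G @ [CTVar a])"
    then have zT: "CVar z T \<in> set G" by auto
    then have "CVar z T \<in> set G'" using chk_all.prems(4) by (auto simp: cv_sub_def)
    moreover have "a \<notin> ftv_ty T" using zT chk_all.prems(1) chk_all.hyps(1) by (auto simp: ctx_ok_def)
    moreover have "c \<notin> ftv_ty T" using cvar_ctxtv[OF \<open>CVar z T \<in> set G'\<close>] c by auto
    ultimately show "CVar z T \<in> set ?G" by (auto simp: image_iff tsw_id intro!: bexI[where x="CVar z T"])
  qed
  have "chk ?G e (open_ty 0 (TFree a) A)" using chk_all.IH okG fA tv cv by blast
  note chkT = chk_tsw(1)[OF this, of a c]
  have e1: "map (tsw_ce a c) ?G = G' @ [CTVar c]" by (simp only: tsw_ctx_inv)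
  have e2: "tsw_tm a c e = e" using c chk_all.hyps by (intro tsw_tm_id) auto
  have e3: "tsw a c (open_ty 0 (TFree a) A) = open_ty 0 (TFree c) A"
    using c chk_all.hyps by (simp add: tsw_open tsw_id)
  have "chk (G' @ [CTVar c]) e (open_ty 0 (TFree c) A)"
    using chkT
    unfolding e1 e2 e3 .
  then show ?case using c cG' by (auto intro!: chk_syn_app.chk_all[where a=c])
next
  case (app_all G t e A C)
  have "ftv_ty (open_ty 0 t A) \<subseteq> tvars G" using app_all ftv_open[of 0 t A]
    by (auto simp: wf_mono_def wf_ty_def)
  then have "app G' e (open_ty 0 t A) C" using app_all by blast
  moreover have "wf_mono G' t" using app_all by (blast intro: wf_mono_mono_ctx)
  ultimately show ?case by (rule chk_syn_app.app_all[rotated])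
next
  case (chk_lam x G e A B)
  have okG: "ctx_ok (G @ [CVar x A])" using chk_lam.prems(1,2) by (auto simp: ctx_ok_def)
  obtain y where y: "y \<notin> vars G' \<union> fv_tm e \<union> {x}"
    using fresh[of "vars G' \<union> fv_tm e \<union> {x}"] by auto
  let ?G = "map (vsw_ce x y) (G' @ [CVar y A])"
  have tv: "tvars (G @ [CVar x A]) \<subseteq> tvars ?G" using chk_lam.prems by simp
  have cv: "cv_sub (G @ [CVar x A]) ?G"
    unfolding cv_sub_def
  proof (intro allI impI)
    fix z T assume "CVar z T \<in> set (G @ [CVar x A])"
    then consider "z = x" "T = A" | "CVar z T \<in> set G" by auto
    then show "CVar z T \<in> set ?G"
    proof cases
      case 1 then show ?thesis by (auto simp: image_iff intro!: bexI[where x="CVar y A"])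
    next
      case 2
      then have "z \<in> vars G" by (rule cvar_vars)
      moreover have "CVar z T \<in> set G'" using 2 chk_lam.prems(4) by (auto simp: cv_sub_def)
      moreover have "z \<in> vars G'" using calculation(2) by (rule cvar_vars)
      ultimately have "z \<noteq> x" "z \<noteq> y" "CVar z T \<in> set G'" using chk_lam.hyps y by auto
      then show ?thesis using chk_lam.hyps(1) y
        by (force simp: image_iff intro!: bexI[where x="CVar z T"])
    qed
  qed
  have "chk ?G (open_tm 0 (Free x) e) B" using chk_lam.IH okG chk_lam.prems(2) tv cv by auto
  from chk_vsw(1)[OF this, of x y]
  have "chk (G' @ [CVar y A]) (open_tm 0 (Free y) e) B"
    using y chk_lam.hyps by (simp add: vsw_tm_open vsw_tm_id)
  then show ?case using y by (auto intro!: chk_syn_app.chk_lam[where x=y])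
next
  case (syn_lam G s t x e)
  have okG: "ctx_ok (G @ [CVar x s])" using syn_lam.prems(1) syn_lam.hyps(1)
    by (auto simp: ctx_ok_def wf_mono_def wf_ty_def)
  have ft: "ftv_ty t \<subseteq> tvars (G @ [CVar x s])" using syn_lam.hyps(1) by (auto simp: wf_mono_def wf_ty_def)
  obtain y where y: "y \<notin> vars G' \<union> fv_tm e \<union> {x}"
    using fresh[of "vars G' \<union> fv_tm e \<union> {x}"] by auto
  let ?G = "map (vsw_ce x y) (G' @ [CVar y s])"
  have tv: "tvars (G @ [CVar x s]) \<subseteq> tvars ?G" using syn_lam.prems by simp
  have cv: "cv_sub (G @ [CVar x s]) ?G"
    unfolding cv_sub_def
  proof (intro allI impI)
    fix z T assume "CVar z T \<in> set (G @ [CVar x s])"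
    then consider "z = x" "T = s" | "CVar z T \<in> set G" by auto
    then show "CVar z T \<in> set ?G"
    proof cases
      case 1 then show ?thesis by (auto simp: image_iff intro!: bexI[where x="CVar y s"])
    next
      case 2
      then have "z \<in> vars G" by (rule cvar_vars)
      moreover have "CVar z T \<in> set G'" using 2 syn_lam.prems(3) by (auto simp: cv_sub_def)
      moreover have "z \<in> vars G'" using calculation(2) by (rule cvar_vars)
      ultimately have "z \<noteq> x" "z \<noteq> y" "CVar z T \<in> set G'" using syn_lam.hyps y by auto
      then show ?thesis using syn_lam.hyps(2) y
        by (force simp: image_iff intro!: bexI[where x="CVar z T"])
    qed
  qed
  have "chk ?G (open_tm 0 (Free x) e) t" using syn_lam.IH okG ft tv cv by auto
  from chk_vsw(1)[OF this, of x y]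
  have "chk (G' @ [CVar y s]) (open_tm 0 (Free y) e) t"
    using y syn_lam.hyps by (simp add: vsw_tm_open vsw_tm_id)
  moreover have "wf_mono G' (TArr s t)" using syn_lam.hyps(1) syn_lam.prems(2) by (rule wf_mono_mono_ctx)
  ultimately show ?case using y by (auto intro!: chk_syn_app.syn_lam[where x=y])
next
  case (syn_app G e1 A e2 C)
  then show ?case using syn_ftv(2)[OF syn_app.hyps(1)] by (auto intro: chk_syn_app.syn_app)
next
  case (app_arr G e A C)
  then show ?case by (auto intro: chk_syn_app.app_arr)
qed


lemma fv_open: "fv_tm e \<subseteq> fv_tm (open_tm k u e)"
  by (induction e arbitrary: k) auto
lemma fv_open2: "fv_tm (open_tm k (Free y) e) \<subseteq> insert y (fv_tm e)"
  by (induction e arbitrary: k) auto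
lemma ftv_tm_open: "ftv_tm (open_tm k (Free y) e) = ftv_tm e"
  by (induction e arbitrary: k) auto
lemma tmc_open: "tmc k (open_tm k (Free y) e) \<Longrightarrow> tmc (Suc k) e"
  by (induction e arbitrary: k) (auto split: if_splits)
lemma tmc_open_id: "tmc k e \<Longrightarrow> k \<le> j \<Longrightarrow> open_tm j u e = e"
  by (induction e arbitrary: k j) auto

lemma chk_props:
  shows "chk G e A \<Longrightarrow> fv_tm e \<subseteq> vars G \<and> ftv_tm e \<subseteq> tvars G \<and> tmc 0 e"
    and "syn G e A \<Longrightarrow> fv_tm e \<subseteq> vars G \<and> ftv_tm e \<subseteq> tvars G \<and> tmc 0 e"
    and "app G e A C \<Longrightarrow> fv_tm e \<subseteq> vars G \<and> ftv_tm e \<subseteq> tvars G \<and> tmc 0 e"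
proof (induction rule: chk_syn_app.inducts)
  case (syn_var x A G) then show ?case by (auto dest: cvar_vars)
next
  case (chk_lam x G e A B)
  then show ?case using fv_open[of e 0 "Free x"] by (auto simp: ftv_tm_open dest: tmc_open)
next
  case (syn_lam G s t x e)
  then show ?case using fv_open[of e 0 "Free x"] by (auto simp: ftv_tm_open dest: tmc_open)
qed (auto simp: wf_ty_def)

lemma fv_subst: "fv_tm (subst_tm x u e) \<subseteq> fv_tm e \<union> fv_tm u"
  by (induction e) auto
lemma ftv_subst: "ftv_tm (subst_tm x u e) \<subseteq> ftv_tm e \<union> ftv_tm u"
  by (induction e) auto
lemma subst_open: "tmc 0 u \<Longrightarrow> y \<noteq> x \<Longrightarrow>
   subst_tm x u (open_tm k (Free y) e) = open_tm k (Free y) (subst_tm x u e)"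
  by (induction e arbitrary: k) (auto simp: tmc_open_id)

lemma ctx_ok_wf: "wf_ctx G \<Longrightarrow> ctx_ok G"
  by (induction rule: wf_ctx.induct) (auto simp: ctx_ok_def wf_ty_def)

lemma subst_main:
  assumes se: "syn G e A" and ok: "ctx_ok G" and xG: "x \<notin> vars G"
  shows "chk \<Gamma> e' C \<Longrightarrow> \<Gamma> = G @ [CVar x A] @ D \<Longrightarrow> x \<notin> vars D \<Longrightarrow> chk (G @ D) (subst_tm x e e') C"
    and "syn \<Gamma> e' C \<Longrightarrow> \<Gamma> = G @ [CVar x A] @ D \<Longrightarrow> x \<notin> vars D \<Longrightarrow> syn (G @ D) (subst_tm x e e') C"
    and "app \<Gamma> e' B C \<Longrightarrow> \<Gamma> = G @ [CVar x A] @ D \<Longrightarrow> x \<notin> vars D \<Longrightarrow> app (G @ D) (subst_tm x e e') B C"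
proof (induction arbitrary: D and D and D rule: chk_syn_app.inducts)
  case (syn_var y T \<Gamma>)
  show ?case
  proof (cases "y = x")
    case True
    then have "T = A" using syn_var xG by (auto dest: cvar_vars)
    moreover have "syn (G @ D) e A"
      using weak(2)[OF se ok, of "G @ D"] by (auto simp: cv_sub_def)
    ultimately show ?thesis using True by simp
  next
    case False
    then show ?thesis using syn_var by (auto intro: chk_syn_app.syn_var)
  qed
next
  case (chk_sub \<Gamma> e1 T C)
  then have "sub (G @ D) T C" by (auto intro: sub_tvars)
  then show ?case using chk_sub by (auto intro: chk_syn_app.chk_sub)
next
  case (syn_anno \<Gamma> T e1)
  then show ?case by (auto intro!: chk_syn_app.syn_anno simp: wf_ty_def)
next
  case (chk_unit \<Gamma>) then show ?case by (auto intro: chk_syn_app.chk_unit)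
next
  case (syn_unit \<Gamma>) then show ?case by (auto intro: chk_syn_app.syn_unit)
next
  case (chk_all a \<Gamma> T e1)
  have "chk (G @ D @ [CTVar a]) (subst_tm x e e1) (open_ty 0 (TFree a) T)"
    using chk_all.IH[of "D @ [CTVar a]"] chk_all.prems by simp
  moreover have "a \<notin> ftv_tm (subst_tm x e e1)"
    using ftv_subst[of x e e1] chk_props(2)[OF se] chk_all by auto
  ultimately show ?case using chk_all by (auto intro!: chk_syn_app.chk_all[where a=a])
next
  case (app_all \<Gamma> t e1 T C)
  then show ?case by (auto intro!: chk_syn_app.app_all[where t=t] simp: wf_mono_def wf_ty_def)
next
  case (chk_lam y \<Gamma> e1 T B)
  have yx: "y \<noteq> x" using chk_lam by auto
  have "chk (G @ D @ [CVar y T]) (subst_tm x e (open_tm 0 (Free y) e1)) B"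
    using chk_lam.IH[of "D @ [CVar y T]"] chk_lam.prems yx by simp
  then have "chk ((G @ D) @ [CVar y T]) (open_tm 0 (Free y) (subst_tm x e e1)) B"
    using subst_open[of e y x 0 e1] chk_props(2)[OF se] yx by simp
  moreover have "y \<notin> fv_tm (subst_tm x e e1)"
    using fv_subst[of x e e1] chk_props(2)[OF se] chk_lam by auto
  ultimately show ?case using chk_lam by (auto intro!: chk_syn_app.chk_lam[where x=y])
next
  case (syn_lam \<Gamma> s t y e1)
  have yx: "y \<noteq> x" using syn_lam by auto
  have "chk (G @ D @ [CVar y s]) (subst_tm x e (open_tm 0 (Free y) e1)) t"
    using syn_lam.IH[of "D @ [CVar y s]"] syn_lam.prems yx by simp
  then have "chk ((G @ D) @ [CVar y s]) (open_tm 0 (Free y) (subst_tm x e e1)) t"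
    using subst_open[of e y x 0 e1] chk_props(2)[OF se] yx by simp
  moreover have "y \<notin> fv_tm (subst_tm x e e1)"
    using fv_subst[of x e e1] chk_props(2)[OF se] syn_lam by auto
  moreover have "wf_mono (G @ D) (TArr s t)" using syn_lam by (auto simp: wf_mono_def wf_ty_def)
  ultimately show ?case using syn_lam by (auto intro!: chk_syn_app.syn_lam[where x=y])
next
  case (syn_app \<Gamma> e1 T e2 C)
  then show ?case by (auto intro: chk_syn_app.syn_app)
next
  case (app_arr \<Gamma> e1 T C)
  then show ?case by (auto intro: chk_syn_app.app_arr)
qed

theorem mainTheorem3:
  assumes "wf_ctx G"
    and "x \<notin> vars G"
    and "syn G e A"
  shows "(chk (G @ [CVar x A]) e' C \<longrightarrow> chk G (subst_tm x e e') C)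
       \<and> (syn (G @ [CVar x A]) e' C \<longrightarrow> syn G (subst_tm x e e') C)
       \<and> (app (G @ [CVar x A]) e' B C \<longrightarrow> app G (subst_tm x e e') B C)"
  using subst_main[OF assms(3) ctx_ok_wf[OF assms(1)] assms(2), where D="[]"] by simp

end
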